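(* Let $q\ge2$ and let $(w_{n_k})_{k\ge1}$ be a $q$-lacunary sequence of Walsh functions. Then for every $M\ge1$ and all real numbers $a_1,\dots,a_M$, the functions $R_M=\sum_{k=1}^Ma_kr_k$ and $W_M=\sum_{k=1}^Ma_kw_{n_k}$ have the same distribution function on $[0,1]$ (i.e. $m(\{|R_M|>\lambda\})=m(\{|W_M|>\lambda\})$ for all $\lambda>0$).
   Context: $m$ is Lebesgue measure on $[0,1]$. Rademacher functions $r_k(t)=\mathrm{sign}\sin(2^k\pi t)$, $k\ge1$. Walsh functions (Paley numbering): $w_0=1$ and for $k=a_12^0+\dots+a_n2^{n-1}$ with $a_i\in\{0,1\}$, $w_k=r_1^{a_1}\cdots r_n^{a_n}$. A sequence $(w_{n_k})$ is $q$-lacunary if $n_{k+1}/n_k\ge q$ for all $k\ge1$. *)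

theory Defs
  imports "HOL-Analysis.Analysis"
begin

definition rademacher :: "nat \<Rightarrow> real \<Rightarrow> real" where
  "rademacher k t = sgn (sin (2 ^ k * pi * t))"

text \<open>Walsh functions in Paley numbering: for k = sum a_i 2^(i-1),
  w_k = prod r_i^(a_i); w_0 = 1 (empty product).  Bit i (0-based) of k
  corresponds to the Rademacher function r_(i+1); bits with i >= k are zero.\<close>
definition walsh :: "nat \<Rightarrow> real \<Rightarrow> real" where
  "walsh k t = (\<Prod>i<k. if odd (k div 2 ^ i) then rademacher (Suc i) t else 1)"

definition lacunary :: "real \<Rightarrow> (nat \<Rightarrow> nat) \<Rightarrow> bool" where
  "lacunary q n \<longleftrightarrow> (\<forall>k\<ge>1. n k > 0 \<and> real (n (Suc k)) / real (n k) \<ge> q)"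

end

theory Submission
  imports Defs "HOL-Library.Discrete_Functions"
begin


definition SH :: "nat \<Rightarrow> (nat \<Rightarrow> real) set" where
  "SH H = PiE {1..H} (\<lambda>_. {-1,1})"

lemma card_SH: "card (SH H) = 2 ^ H"
proof -
  have "card {-1,1::real} = 2" by simp
  then show ?thesis unfolding SH_def by (simp only: card_PiE finite_atLeastAtMost prod_constant card_atLeastAtMost) simp
qed

lemma finite_SH: "finite (SH H)"
  unfolding SH_def by (simp add: finite_PiE)

lemma prod_pm1:
  assumes "finite J" "\<forall>i\<in>J. x i \<in> {-1,1::real}"
  shows "(\<Prod>i\<in>J. x i) \<in> {-1,1}"
  using assms by (induction J rule: finite_induct) auto

lemma prod_flip:
  assumes "finite J" "p \<in> J"
  shows "(\<Prod>i\<in>J. (x(p := - x p)) i) = - (\<Prod>i\<in>J. x i :: real)"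
proof -
  have a: "(\<Prod>i\<in>J. (x(p := - x p)) i) = (x(p := - x p)) p * (\<Prod>i\<in>J-{p}. (x(p := - x p)) i)"
    using assms by (meson prod.remove)
  have b: "(\<Prod>i\<in>J-{p}. (x(p := - x p)) i) = (\<Prod>i\<in>J-{p}. x i)"
    by (rule prod.cong) auto
  have c: "x p * (\<Prod>i\<in>J-{p}. x i) = (\<Prod>i\<in>J. x i)"
    using assms by (metis prod.remove)
  show ?thesis using a b c by simp
qed

lemma prod_noflip:
  assumes "p \<notin> J"
  shows "(\<Prod>i\<in>J. (x(p := c)) i) = (\<Prod>i\<in>J. x i :: real)"
  using assms by (intro prod.cong) auto

lemma fiber:
  assumes "\<forall>k\<in>{1..M}. J k \<subseteq> {1..m k} \<and> m k \<in> J k \<and> m k \<le> H"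
    and "\<forall>k j. 1 \<le> k \<longrightarrow> k < j \<longrightarrow> j \<le> M \<longrightarrow> m k < m j"
    and "\<forall>k\<in>{1..M}. v k \<in> {-1,1::real}"
  shows "card {x\<in>SH H. \<forall>k\<in>{1..M}. (\<Prod>i\<in>J k. x i) = v k} * 2^M = 2^H"
  using assms
proof (induction M)
  case 0
  then show ?case by (simp add: card_SH)
next
  case (Suc M)
  define A where "A = {x\<in>SH H. \<forall>k\<in>{1..M}. (\<Prod>i\<in>J k. x i) = v k}"
  define B where "B = {x\<in>A. (\<Prod>i\<in>J (Suc M). x i) = v (Suc M)}"
  define B' where "B' = {x\<in>A. (\<Prod>i\<in>J (Suc M). x i) = - v (Suc M)}"
  define p where "p = m (Suc M)"
  have IH: "card A * 2^M = 2^H"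
    unfolding A_def using Suc.prems by (intro Suc.IH) auto
  have JS: "J (Suc M) \<subseteq> {1..p}" "p \<in> J (Suc M)" "p \<le> H"
    using Suc.prems(1) unfolding p_def by auto
  have finJ: "finite (J (Suc M))" using JS(1) finite_subset by blast
  have pm: "(\<Prod>i\<in>J (Suc M). x i) \<in> {-1,1}" if "x \<in> SH H" for x
  proof (rule prod_pm1[OF finJ], intro ballI)
    fix i assume "i \<in> J (Suc M)"
    then have "i \<in> {1..H}" using JS by auto
    then show "x i \<in> {-1,1}" using that unfolding SH_def by (auto simp: PiE_iff)
  qed
  have v1: "v (Suc M) \<in> {-1,1}" using Suc.prems(3) by auto
  have AU: "A = B \<union> B'" unfolding B_def B'_def using pm v1 by (auto simp: A_def) (metis insert_iff singletonD)+
  have disj: "B \<inter> B' = {}" unfolding B_def B'_def using v1 by auto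
  have finA: "finite A" unfolding A_def using finite_SH by auto
  have notin: "p \<notin> J k" if "k \<in> {1..M}" for k
  proof -
    have "m k < p" unfolding p_def using Suc.prems(2) that by auto
    moreover have "J k \<subseteq> {1..m k}" using Suc.prems(1) that by auto
    ultimately show ?thesis by auto
  qed
  define N where "N = (\<lambda>x::nat\<Rightarrow>real. x(p := - x p))"
  have NN: "N (N x) = x" for x unfolding N_def by auto
  have NS: "N x \<in> SH H" if "x \<in> SH H" for x
  proof -
    have "1 \<le> p" using JS by auto
    then show ?thesis using that JS unfolding SH_def N_def by (auto simp: PiE_iff extensional_def)
  qed
  have NA: "N x \<in> A" if "x \<in> A" for x
    using that NS notin prod_noflip[of p] unfolding A_def N_def by (smt (verit) mem_Collect_eq)
  have Nw: "(\<Prod>i\<in>J (Suc M). N x i) = - (\<Prod>i\<in>J (Suc M). x i)" for x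
    unfolding N_def using prod_flip[OF finJ JS(2)] by simp
  have img: "N ` B = B'"
  proof
    show "N ` B \<subseteq> B'" using NA Nw unfolding B_def B'_def by auto
    show "B' \<subseteq> N ` B"
    proof
      fix x assume "x \<in> B'"
      then have "N x \<in> B" using NA Nw unfolding B_def B'_def by auto
      then show "x \<in> N ` B" using NN by (metis image_eqI)
    qed
  qed
  have "inj_on N B" by (metis NN inj_onI)
  then have cB: "card B' = card B" using img card_image by blast
  have "card A = card B + card B'"
    using AU disj finA by (simp add: card_Un_disjoint)
  then have "card A = 2 * card B" using cB by simp
  moreover have "{x\<in>SH H. \<forall>k\<in>{1..Suc M}. (\<Prod>i\<in>J k. x i) = v k} = B"
    unfolding B_def A_def by (auto simp: le_Suc_eq)
  ultimately show ?case using IH by simp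
qed

lemma count:
  assumes J: "\<forall>k\<in>{1..M}. J k \<subseteq> {1..m k} \<and> m k \<in> J k \<and> m k \<le> H"
    and mono: "\<forall>k j. 1 \<le> k \<longrightarrow> k < j \<longrightarrow> j \<le> M \<longrightarrow> m k < m j"
    and Q: "\<forall>v v'. (\<forall>k\<in>{1..M}. v k = v' k) \<longrightarrow> Q v = Q v'"
  shows "card {x\<in>SH H. Q (\<lambda>k. \<Prod>i\<in>J k. x i)} * 2^M
       = 2^H * card {v\<in>PiE {1..M} (\<lambda>_. {-1,1::real}). Q v}"
proof -
  define VQ where "VQ = {v\<in>PiE {1..M} (\<lambda>_. {-1,1::real}). Q v}"
  define F where "F = (\<lambda>v. {x\<in>SH H. \<forall>k\<in>{1..M}. (\<Prod>i\<in>J k. x i) = v k})"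
  have finVQ: "finite VQ" unfolding VQ_def by (simp add: finite_PiE)
  have pm: "(\<Prod>i\<in>J k. x i) \<in> {-1,1}" if "x \<in> SH H" "k \<in> {1..M}" for x k
  proof -
    have JJ: "J k \<subseteq> {1..H}" using J that(2) by fastforce
    then have "finite (J k)" using finite_subset by blast
    then show ?thesis
    proof (rule prod_pm1, intro ballI)
      fix i assume "i \<in> J k"
      then have "i \<in> {1..H}" using JJ by auto
      then show "x i \<in> {-1,1}" using that unfolding SH_def by (auto simp: PiE_iff)
    qed
  qed
  have eq: "{x\<in>SH H. Q (\<lambda>k. \<Prod>i\<in>J k. x i)} = (\<Union>v\<in>VQ. F v)"
  proof (intro equalityI subsetI)
    fix x assume x: "x \<in> {x\<in>SH H. Q (\<lambda>k. \<Prod>i\<in>J k. x i)}"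
    define v where "v = restrict (\<lambda>k. \<Prod>i\<in>J k. x i) {1..M}"
    have "Q v = Q (\<lambda>k. \<Prod>i\<in>J k. x i)" using Q unfolding v_def by auto
    moreover have "v \<in> PiE {1..M} (\<lambda>_. {-1,1::real})"
      unfolding v_def using pm x by auto
    ultimately have "v \<in> VQ" using x unfolding VQ_def by auto
    moreover have "x \<in> F v" using x unfolding F_def v_def by auto
    ultimately show "x \<in> (\<Union>v\<in>VQ. F v)" by blast
  next
    fix x assume "x \<in> (\<Union>v\<in>VQ. F v)"
    then obtain v where v: "v \<in> VQ" "x \<in> F v" by blast
    then have "Q v = Q (\<lambda>k. \<Prod>i\<in>J k. x i)" using Q unfolding F_def by auto
    then show "x \<in> {x\<in>SH H. Q (\<lambda>k. \<Prod>i\<in>J k. x i)}" using v unfolding VQ_def F_def by auto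
  qed
  have disj: "\<forall>v\<in>VQ. \<forall>v'\<in>VQ. v \<noteq> v' \<longrightarrow> F v \<inter> F v' = {}"
  proof (intro ballI impI)
    fix v v' assume vv: "v \<in> VQ" "v' \<in> VQ" "v \<noteq> v'"
    then obtain k where k: "k \<in> {1..M}" "v k \<noteq> v' k"
      unfolding VQ_def by (auto simp: PiE_iff extensional_def fun_eq_iff) (metis atLeastAtMost_iff)
    then show "F v \<inter> F v' = {}" unfolding F_def by auto
  qed
  have finF: "\<forall>v\<in>VQ. finite (F v)" unfolding F_def using finite_SH by auto
  have cF: "card (F v) * 2^M = 2^H" if "v \<in> VQ" for v
    unfolding F_def
  proof (rule fiber[OF J mono])
    show "\<forall>k\<in>{1..M}. v k \<in> {-1,1::real}" using that unfolding VQ_def by (auto simp: PiE_iff)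
  qed
  have "card {x\<in>SH H. Q (\<lambda>k. \<Prod>i\<in>J k. x i)} = (\<Sum>v\<in>VQ. card (F v))"
    unfolding eq using card_UN_disjoint[OF finVQ finF disj] by simp
  then have "card {x\<in>SH H. Q (\<lambda>k. \<Prod>i\<in>J k. x i)} * 2^M = (\<Sum>v\<in>VQ. card (F v) * 2^M)"
    by (simp add: sum_distrib_right)
  also have "\<dots> = (\<Sum>v\<in>VQ. 2^H)" using cF by simp
  finally show ?thesis unfolding VQ_def by simp
qed



lemma rad_interval:
  assumes j: "j < 2^H" and t1: "real j / 2^H < t" and t2: "t < (real j + 1) / 2^H"
    and k: "1 \<le> k" "k \<le> H"
  shows "rademacher k t = (if odd (j div 2^(H-k)) then -1 else 1)"
proof -
  define d :: nat where "d = 2^(H-k)"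
  define q where "q = j div d"
  define r where "r = j mod d"
  have dpos: "d > 0" unfolding d_def by simp
  have jqr: "real j = real q * real d + real r"
    unfolding q_def r_def by (metis div_mult_mod_eq of_nat_add of_nat_mult)
  have rd: "real r + 1 \<le> real d" unfolding r_def using dpos
    by (metis Suc_leI mod_less_divisor of_nat_Suc of_nat_le_iff add.commute)
  have HH: "(2::real)^H = 2^k * real d" unfolding d_def using k
    by (simp add: power_add[symmetric])
  define y where "y = 2^k * t"
  have p2: "(2::real)^H > 0" by simp
  have a: "real j < y * real d" using t1 HH p2 unfolding y_def by (simp add: pos_divide_less_eq algebra_simps)
  have b: "y * real d < real j + 1" using t2 HH p2 unfolding y_def by (simp add: pos_less_divide_eq algebra_simps)
  have "real q * real d < y * real d" using a jqr by simp
  then have th0: "0 < y - real q" using dpos by simp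
  have "y * real d < real q * real d + real d" using b jqr rd by simp
  then have "y * real d < (real q + 1) * real d" by (simp add: algebra_simps)
  then have th1: "y - real q < 1" using dpos by (simp add: mult_less_cancel_right)
  define \<theta> where "\<theta> = y - real q"
  have "sin (2 ^ k * pi * t) = sin (real q * pi + \<theta> * pi)"
    unfolding \<theta>_def y_def by (simp add: algebra_simps)
  also have "\<dots> = (-1)^q * sin (\<theta> * pi)" by (simp add: sin_add)
  finally have s: "sin (2 ^ k * pi * t) = (-1)^q * sin (\<theta> * pi)" .
  have sp: "sin (\<theta> * pi) > 0" using th0 th1 unfolding \<theta>_def by (intro sin_gt_zero) auto
  show ?thesis unfolding rademacher_def s q_def[symmetric] d_def[symmetric]
    using sp by (cases "even q") (auto simp: sgn_mult)
qed

lemma meas_Ioo: "a \<le> b \<Longrightarrow> measure lebesgue {a<..<(b::real)} = b - a"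
  using measure_completion[of "{a<..<b}" lborel] by simp

lemma meas:
  assumes P: "\<forall>r r'. (\<forall>k\<in>{1..H}. r k = r' k) \<longrightarrow> P r = P r'"
  shows "measure lebesgue {t\<in>{0..1}. P (\<lambda>k. rademacher k t)} = card {x\<in>SH H. P x} / 2^H"
proof -
  define e where "e j = restrict (\<lambda>k. if odd (j div 2^(H-k)) then -1 else (1::real)) {1..H}" for j :: nat
  have inj: "inj_on e {..<2^H}"
  proof (rule inj_onI)
    fix j j' assume jj: "j \<in> {..<2^H}" "j' \<in> {..<2^H}" "e j = e j'"
    show "j = j'"
    proof (rule bit_eqI)
      fix i
      show "bit j i = bit j' i"
      proof (cases "i < H")
        case True
        then have "H - i \<in> {1..H}" "H - (H - i) = i" by auto
        then have "e j (H - i) = e j' (H - i)" using jj by simp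
        then show ?thesis using \<open>H - i \<in> {1..H}\<close> \<open>H - (H - i) = i\<close>
          unfolding e_def bit_iff_odd by (auto split: if_splits)
      next
        case False
        then have "(2::nat)^H \<le> 2^i" by simp
        then have "j < 2^i" "j' < 2^i" using jj by (meson lessThan_iff less_le_trans)+
        then have "j div 2^i = 0" "j' div 2^i = 0" by auto
        then show ?thesis unfolding bit_iff_odd by simp
      qed
    qed
  qed
  have sub: "e ` {..<2^H} \<subseteq> SH H"
  proof
    fix x assume "x \<in> e ` {..<2^H}"
    then obtain j where x: "x = e j" by auto
    have "\<forall>k\<in>{1..H}. e j k \<in> {-1,1}" unfolding e_def by simp
    moreover have "e j \<in> extensional {1..H}" unfolding e_def by simp
    ultimately show "x \<in> SH H" unfolding SH_def x by (simp add: PiE_iff)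
  qed
  have img: "e ` {..<2^H} = SH H"
    by (rule card_subset_eq[OF finite_SH sub]) (simp add: card_image[OF inj] card_SH)
  define G where "G = {j\<in>{..<2^H}. P (e j)}"
  have "{x\<in>SH H. P x} = e ` G" unfolding G_def img[symmetric] by auto
  then have cardG: "card {x\<in>SH H. P x} = card G"
    using card_image inj_on_subset[OF inj] unfolding G_def by (metis (no_types, lifting) mem_Collect_eq subsetI)
  define U where "U j = {real j / 2^H <..< (real j + 1) / 2^H}" for j :: nat
  define T where "T = (\<Union>j\<in>G. U j)"
  define A where "A = {t\<in>{0..1}. P (\<lambda>k. rademacher k t)}"
  define D where "D = (\<lambda>j::nat. real j / 2^H) ` {..2^H}"
  have radU: "P (\<lambda>k. rademacher k t) = P (e j)" if "j < 2^H" "t \<in> U j" for j t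
  proof -
    have "\<forall>k\<in>{1..H}. rademacher k t = e j k"
    proof
      fix k assume k: "k \<in> {1..H}"
      have tt: "real j / 2^H < t" "t < (real j + 1) / 2^H" using that(2) unfolding U_def by auto
      have "rademacher k t = (if odd (j div 2^(H-k)) then -1 else 1)"
        using k by (intro rad_interval[OF that(1) tt]) auto
      also have "\<dots> = e j k" unfolding e_def using k by simp
      finally show "rademacher k t = e j k" .
    qed
    then show ?thesis by (rule P[THEN spec, THEN spec, THEN mp])
  qed
  have finG: "finite G" unfolding G_def by simp
  have Ume: "U j \<in> lmeasurable" for j unfolding U_def by simp
  have Umeas: "measure lebesgue (U j) = 1 / 2^H" for j
    unfolding U_def by (subst meas_Ioo) (auto simp: field_simps)
  have disj: "pairwise (\<lambda>i j. disjnt (U i) (U j)) G"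
  proof (rule pairwiseI)
    fix i j assume ij: "i \<in> G" "j \<in> G" "i \<noteq> j"
    show "disjnt (U i) (U j)"
    proof (rule ccontr)
      assume "\<not> disjnt (U i) (U j)"
      then obtain t where t: "t \<in> U i" "t \<in> U j" unfolding disjnt_def by auto
      have p: "(2::real)^H > 0" by simp
      have "real i < t * 2^H" "t * 2^H < real i + 1" "real j < t * 2^H" "t * 2^H < real j + 1"
        using t p unfolding U_def by (auto simp: field_simps)
      then have "real i < real j + 1" "real j < real i + 1" by linarith+
      then show False using ij(3) by linarith
    qed
  qed
  have mT: "measure lebesgue T = card G / 2^H"
    unfolding T_def by (subst measure_UNION'[OF finG]) (auto simp: Ume disj Umeas)
  have TA: "T \<subseteq> A"
  proof
    fix t assume "t \<in> T"
    then obtain j where j: "j \<in> G" "t \<in> U j" unfolding T_def by auto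
    have p: "(2::real)^H > 0" by simp
    have "real j + 1 \<le> 2^H" using j(1) unfolding G_def
      by (metis lessThan_iff mem_Collect_eq of_nat_Suc of_nat_le_iff Suc_leI add.commute of_nat_numeral of_nat_power)
    moreover have "real j < t * 2^H" "t * 2^H < real j + 1" using j(2) p unfolding U_def by (auto simp: field_simps)
    ultimately have "0 < t * 2^H" "t * 2^H \<le> 1 * 2^H" by linarith+
    then have "0 < t" "t \<le> 1" using p by (simp add: zero_less_mult_iff, meson mult_right_le_imp_le less_le)
    then have "t \<in> {0..1}" by simp
    then show "t \<in> A" using radU j unfolding A_def G_def by auto
  qed
  have AT: "A - T \<subseteq> D"
  proof
    fix t assume t: "t \<in> A - T"
    show "t \<in> D"
    proof (rule ccontr)
      assume nD: "t \<notin> D"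
      have p: "(2::real)^H > 0" by simp
      have t01: "0 \<le> t" "t \<le> 1" using t unfolding A_def by auto
      have "1 \<in> D" unfolding D_def by (rule image_eqI[of _ _ "2^H"]) auto
      then have t1: "t < 1" using t01 nD by (cases "t = 1") auto
      define j where "j = nat \<lfloor>t * 2^H\<rfloor>"
      have fl0: "0 \<le> \<lfloor>t * 2^H\<rfloor>" using t01 by simp
      have jr: "real j = of_int \<lfloor>t * 2^H\<rfloor>" unfolding j_def using fl0 by simp
      have j1: "real j \<le> t * 2^H" "t * 2^H < real j + 1" unfolding jr by linarith+
      have "t * 2^H < 2^H" using t1 p by simp
      then have "real j < 2^H" using j1 by linarith
      then have jH: "j < 2^H" by (metis of_nat_less_iff of_nat_numeral of_nat_power)
      have "real j \<noteq> t * 2^H"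
      proof
        assume "real j = t * 2^H"
        then have "t = real j / 2^H" using p by (simp add: field_simps)
        then have "t \<in> D" unfolding D_def using jH by auto
        then show False using nD by simp
      qed
      then have "t \<in> U j" using j1 p unfolding U_def by (auto simp: field_simps)
      then have "P (e j)" using radU[OF jH] t unfolding A_def by auto
      then have "j \<in> G" using jH unfolding G_def by auto
      then show False using t \<open>t \<in> U j\<close> unfolding T_def by auto
    qed
  qed
  have TL: "T \<in> lmeasurable" unfolding T_def using finG Ume by (intro fmeasurable.finite_UN) auto
  have "negligible (T - A \<union> (A - T))"
  proof -
    have "T - A \<union> (A - T) \<subseteq> D" using TA AT by auto
    moreover have "finite D" unfolding D_def by simp
    ultimately show ?thesis using negligible_finite negligible_subset by blast
  qed
  then have "measure lebesgue A = measure lebesgue T" by (rule measure_negligible_symdiff[OF TL])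
  then show ?thesis unfolding A_def mT cardG .
qed



lemma walsh_prod: "walsh n t = (\<Prod>j\<in>Suc ` {i. bit n i}. rademacher j t)"
proof -
  have bl: "i < n" if "bit n i" for i
  proof -
    have "n div 2^i \<noteq> 0" using that unfolding bit_iff_odd by (metis even_zero)
    then have "2^i \<le> n" by (metis div_less not_le)
    moreover have "i < 2^i" by (rule less_exp)
    ultimately show ?thesis by linarith
  qed
  have "walsh n t = (\<Prod>i\<in>{..<n}. if bit n i then rademacher (Suc i) t else 1)"
    unfolding walsh_def bit_iff_odd ..
  also have "\<dots> = (\<Prod>i\<in>{i\<in>{..<n}. bit n i}. rademacher (Suc i) t)"
    by (rule prod.inter_filter[symmetric]) simp
  also have "{i\<in>{..<n}. bit n i} = {i. bit n i}" using bl by auto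
  also have "(\<Prod>i\<in>{i. bit n i}. rademacher (Suc i) t) = (\<Prod>j\<in>Suc ` {i. bit n i}. rademacher j t)"
    by (simp add: prod.reindex)
  finally show ?thesis .
qed

lemma bits_bound:
  assumes "n > 0"
  shows "Suc ` {i. bit n i} \<subseteq> {1..Suc (floor_log n)}" "Suc (floor_log n) \<in> Suc ` {i. bit n i}"
proof -
  have lo: "2 ^ floor_log n \<le> n" using floor_log_exp2_le[OF assms] .
  have hi: "n < 2 * 2 ^ floor_log n" by (rule floor_log_exp2_gt)
  show "Suc ` {i. bit n i} \<subseteq> {1..Suc (floor_log n)}"
  proof
    fix x assume "x \<in> Suc ` {i. bit n i}"
    then obtain i where i: "x = Suc i" "bit n i" by auto
    have "n div 2^i \<noteq> 0" using i(2) unfolding bit_iff_odd by (metis even_zero)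
    then have "2^i \<le> n" by (metis div_less not_le)
    then have "(2::nat)^i < 2^(Suc (floor_log n))" using hi by simp
    then show "x \<in> {1..Suc (floor_log n)}" using i
      by (metis One_nat_def Suc_le_mono atLeastAtMost_iff le0 less_Suc_eq_le nat_power_less_imp_less zero_less_numeral)
  qed
  have "n div 2 ^ floor_log n = 1"
    using lo hi by (intro div_nat_eqI) auto
  then have "bit n (floor_log n)" unfolding bit_iff_odd by simp
  then show "Suc (floor_log n) \<in> Suc ` {i. bit n i}" by auto
qed

theorem lemma3p4:
  fixes q :: real and n :: "nat \<Rightarrow> nat" and a :: "nat \<Rightarrow> real" and M :: nat and lam :: real
  assumes "q \<ge> 2" and "lacunary q n" and "M \<ge> 1" and "lam > 0"
  shows "measure lebesgue {t \<in> {0..1}. \<bar>\<Sum>k=1..M. a k * rademacher k t\<bar> > lam}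
       = measure lebesgue {t \<in> {0..1}. \<bar>\<Sum>k=1..M. a k * walsh (n k) t\<bar> > lam}"
proof -
  define m where "m k = Suc (floor_log (n k))" for k
  define I where "I k = Suc ` {i. bit (n k) i}" for k
  define H where "H = m M"
  have npos: "n k > 0" if "k \<ge> 1" for k using assms(2) that unfolding lacunary_def by auto
  have step: "m k < m (Suc k)" if "k \<ge> 1" for k
  proof -
    have "real (n (Suc k)) / real (n k) \<ge> q" using assms(2) that unfolding lacunary_def by auto
    then have "q * real (n k) \<le> real (n (Suc k))" using npos[OF that]
      by (simp add: pos_le_divide_eq)
    moreover have "2 * real (n k) \<le> q * real (n k)" using assms(1) by (intro mult_right_mono) auto
    ultimately have "real (n (Suc k)) \<ge> 2 * real (n k)" by linarith
    then have "2 * n k \<le> n (Suc k)" by linarith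
    then have "floor_log (2 * n k) \<le> floor_log (n (Suc k))" using floor_log_mono by (simp add: monoD)
    then show ?thesis unfolding m_def using npos[OF that] by simp
  qed
  have mono: "\<forall>k j. 1 \<le> k \<longrightarrow> k < j \<longrightarrow> j \<le> M \<longrightarrow> m k < m j"
  proof (intro allI impI)
    fix k j assume kj: "1 \<le> k" "k < j" "j \<le> M"
    show "m k < m j" using kj(2)
    proof (induction j rule: less_induct)
      case (less j)
      then obtain j' where j': "j = Suc j'" "k \<le> j'" by (metis Suc_le_eq lessE less_imp_le_nat less_Suc_eq_le)
      show ?case
      proof (cases "k = j'")
        case True then show ?thesis using step kj(1) j' by simp
      next
        case False
        then have "m k < m j'" using less.IH j' by simp
        also have "m j' < m j" using step kj(1) j' by simp
        finally show ?thesis .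
      qed
    qed
  qed
  have mkk: "k \<le> m k" if "1 \<le> k" for k
    using that
  proof (induction k rule: dec_induct)
    case base then show ?case unfolding m_def by simp
  next
    case (step k) then show ?case using \<open>\<And>k. k \<ge> 1 \<Longrightarrow> m k < m (Suc k)\<close>[of k] by simp
  qed
  have mH: "m k \<le> H" if "k \<in> {1..M}" for k
    using mono that unfolding H_def by (cases "k = M") (auto simp: less_imp_le)
  have MH: "M \<le> H" using mkk assms(3) unfolding H_def by simp
  have JI: "\<forall>k\<in>{1..M}. I k \<subseteq> {1..m k} \<and> m k \<in> I k \<and> m k \<le> H"
    using bits_bound npos mH unfolding I_def m_def by auto
  have JR: "\<forall>k\<in>{1..M}. {k} \<subseteq> {1..id k} \<and> id k \<in> {k} \<and> id k \<le> H"
    using MH by auto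
  have monoR: "\<forall>k j. 1 \<le> k \<longrightarrow> k < j \<longrightarrow> j \<le> M \<longrightarrow> id k < id j" by simp
  define Q where "Q v = (\<bar>\<Sum>k=1..M. a k * v k\<bar> > lam)" for v :: "nat \<Rightarrow> real"
  have Qd: "\<forall>v v'. (\<forall>k\<in>{1..M}. v k = v' k) \<longrightarrow> Q v = Q v'"
    unfolding Q_def by (metis (no_types, lifting) sum.cong)
  have c1: "card {x\<in>SH H. Q (\<lambda>k. \<Prod>i\<in>I k. x i)} * 2^M
       = 2^H * card {v\<in>PiE {1..M} (\<lambda>_. {-1,1::real}). Q v}"
    by (rule count[OF JI mono Qd])
  have c2: "card {x\<in>SH H. Q (\<lambda>k. \<Prod>i\<in>{k}. x i)} * 2^M
       = 2^H * card {v\<in>PiE {1..M} (\<lambda>_. {-1,1::real}). Q v}"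
    by (rule count[OF JR monoR Qd])
  have ceq: "card {x\<in>SH H. Q x} = card {x\<in>SH H. Q (\<lambda>k. \<Prod>i\<in>I k. x i)}"
  proof -
    have "card {x\<in>SH H. Q x} * 2^M = card {x\<in>SH H. Q (\<lambda>k. \<Prod>i\<in>I k. x i)} * 2^M"
      using c1 c2 by simp
    then show ?thesis by simp
  qed
  have PR: "\<forall>r r'. (\<forall>k\<in>{1..H}. r k = r' k) \<longrightarrow> Q r = Q r'"
  proof (intro allI impI)
    fix r r' :: "nat \<Rightarrow> real" assume "\<forall>k\<in>{1..H}. r k = r' k"
    then have "\<forall>k\<in>{1..M}. r k = r' k" using MH by auto
    then show "Q r = Q r'" by (rule Qd[THEN spec, THEN spec, THEN mp])
  qed
  have PW: "\<forall>r r'. (\<forall>k\<in>{1..H}. r k = r' k) \<longrightarrow> Q (\<lambda>k. \<Prod>i\<in>I k. r i) = Q (\<lambda>k. \<Prod>i\<in>I k. r' i)"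
  proof (intro allI impI)
    fix r r' :: "nat \<Rightarrow> real" assume rr: "\<forall>k\<in>{1..H}. r k = r' k"
    have "\<forall>k\<in>{1..M}. (\<Prod>i\<in>I k. r i) = (\<Prod>i\<in>I k. r' i)"
    proof
      fix k assume k: "k \<in> {1..M}"
      have "I k \<subseteq> {1..m k}" "m k \<le> H" using JI k by auto
      then have "I k \<subseteq> {1..H}" by auto
      then show "(\<Prod>i\<in>I k. r i) = (\<Prod>i\<in>I k. r' i)" using rr by (intro prod.cong) auto
    qed
    then show "Q (\<lambda>k. \<Prod>i\<in>I k. r i) = Q (\<lambda>k. \<Prod>i\<in>I k. r' i)" by (rule Qd[THEN spec, THEN spec, THEN mp])
  qed
  have L: "measure lebesgue {t \<in> {0..1}. \<bar>\<Sum>k=1..M. a k * rademacher k t\<bar> > lam}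
      = card {x\<in>SH H. Q x} / 2^H"
  proof -
    have "{t \<in> {0..1}. \<bar>\<Sum>k=1..M. a k * rademacher k t\<bar> > lam} = {t \<in> {0..1}. Q (\<lambda>k. rademacher k t)}"
      unfolding Q_def ..
    then show ?thesis using meas[OF PR] by simp
  qed
  have "{t \<in> {0..1}. \<bar>\<Sum>k=1..M. a k * walsh (n k) t\<bar> > lam}
      = {t \<in> {0..1}. Q (\<lambda>k. \<Prod>i\<in>I k. rademacher i t)}"
    by (simp only: Q_def I_def walsh_prod)
  then have R: "measure lebesgue {t \<in> {0..1}. \<bar>\<Sum>k=1..M. a k * walsh (n k) t\<bar> > lam}
      = card {x\<in>SH H. Q (\<lambda>k. \<Prod>i\<in>I k. x i)} / 2^H"
    using meas[OF PW] by (simp only:)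
  show ?thesis unfolding L R ceq ..
qed

end
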